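(* Let $g\ge1$, $A=\begin{pmatrix}0&0\\1&0\end{pmatrix}$, and let $\mathcal M_A=\{X(\lambda)=\lambda^{g+1}A+\sum_{i=0}^g\lambda^iX_i\mid X_i\in\mathfrak{sl}(2)\}$ with the Poisson tensor $P_0$ described in the context. The symplectic leaves of $P_0$ have dimension $2(g+1)$. Moreover, define $H(\lambda):\mathcal M_A\to\mathbb C$ by $H(X(\lambda))=\tfrac12\mathrm{Tr}\,X(\lambda)^2$ and let $H_i$ be the coefficient of $\lambda^i$ in $H(\lambda)$. Then $H_{2g+1},\dots,H_{g+1}$ are functionally independent Casimir functions of $P_0$, and consequently the symplectic leaves of $P_0$ are the level surfaces of these Casimirs.
   Context: Tangent and cotangent spaces of $\mathcal M_A\cong\mathfrak{sl}(2)^{g+1}$ are identified with $\mathfrak{sl}(2)^{g+1}$ via the pairing $\langle(V_i),(W_i)\rangle=\sum_{i=0}^g\mathrm{Tr}(V_iW_i)$. Put $X_{g+1}:=A$ and $X_m:=0$ for $m>g+1$. The Poisson tensor $P_0$ maps a covector $(W_0,\dots,W_g)$ to the vector $(\dot X_0,\dots,\dot X_g)$ with $\dot X_i=\sum_{j=0}^{g-i}[X_{i+j+1},W_j]$. *)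

theory Defs
  imports "HOL-Analysis.Analysis" "HOL-Library.Function_Algebras"
begin

type_synonym mat2 = "complex^2^2"
type_synonym tuple = "nat \<Rightarrow> mat2"
  \<comment> \<open>(X_0,...,X_g); components with index > g are kept 0\<close>

definition Amat :: mat2 where
  "Amat = vector [vector [0, 0], vector [1, 0]]"

definition sl2 :: "mat2 set" where
  "sl2 = {M. trace M = 0}"

text \<open>The space M_A, identified with sl(2)^(g+1) (and its tangent/cotangent spaces).\<close>
definition MA :: "nat \<Rightarrow> tuple set" where
  "MA g = {X. (\<forall>i\<le>g. X i \<in> sl2) \<and> (\<forall>i>g. X i = 0)}"

definition tscale :: "complex \<Rightarrow> tuple \<Rightarrow> tuple" where
  "tscale c V = (\<lambda>i. \<chi> a b. c * V i $ a $ b)"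

definition tadd :: "tuple \<Rightarrow> tuple \<Rightarrow> tuple" where
  "tadd V W = (\<lambda>i. V i + W i)"

definition pairing :: "nat \<Rightarrow> tuple \<Rightarrow> tuple \<Rightarrow> complex" where
  "pairing g V W = (\<Sum>i\<le>g. trace (V i ** W i))"

definition commut :: "mat2 \<Rightarrow> mat2 \<Rightarrow> mat2" where
  "commut P Q = P ** Q - Q ** P"

definition Xc :: "nat \<Rightarrow> tuple \<Rightarrow> nat \<Rightarrow> mat2" where
  "Xc g X m = (if m \<le> g then X m else if m = g + 1 then Amat else 0)"

definition P0 :: "nat \<Rightarrow> tuple \<Rightarrow> tuple \<Rightarrow> tuple" where
  "P0 g X W = (\<lambda>i. if i \<le> g then (\<Sum>j\<le>g - i. commut (Xc g X (i + j + 1)) (W j)) else 0)"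

definition Hc :: "nat \<Rightarrow> nat \<Rightarrow> tuple \<Rightarrow> complex" where
  "Hc g m X = (1/2) * (\<Sum>a\<le>g+1. \<Sum>b\<le>g+1. if a + b = m then trace (Xc g X a ** Xc g X b) else 0)"

text \<open>W is the differential of F at X, identified with an element of sl(2)^(g+1) via the trace pairing.\<close>
definition is_grad :: "nat \<Rightarrow> (tuple \<Rightarrow> complex) \<Rightarrow> tuple \<Rightarrow> tuple \<Rightarrow> bool" where
  "is_grad g F X W \<longleftrightarrow> W \<in> MA g \<and>
     (\<forall>V\<in>MA g. ((\<lambda>t::complex. F (tadd X (tscale t V))) has_field_derivative pairing g W V) (at 0))"

end

theory Submission
  imports Defs
begin


lemma sum_app: "(sum f A) x = sum (\<lambda>a. f a x) A"
  by (induct A rule: infinite_finite_induct) auto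

lemma mult2: "((P::mat2) ** Q) $ i $ j = P$i$1*Q$1$j + P$i$2*Q$2$j"
  by (simp add: matrix_matrix_mult_def sum_2)

lemma tr2: "trace (M::mat2) = M$1$1 + M$2$2"
  by (simp add: trace_def sum_2)

lemma mat2_eq: "(M::mat2) = N \<longleftrightarrow> M$1$1 = N$1$1 \<and> M$1$2 = N$1$2 \<and> M$2$1 = N$2$1 \<and> M$2$2 = N$2$2"
  by (auto simp: vec_eq_iff forall_2)

lemma Amat_ent[simp]: "Amat$1$1 = 0" "Amat$1$2 = 0" "Amat$2$1 = 1" "Amat$2$2 = 0"
  by (simp_all add: Amat_def)

lemma trmult: "trace ((P::mat2) ** Q) = P$1$1*Q$1$1 + P$1$2*Q$2$1 + P$2$1*Q$1$2 + P$2$2*Q$2$2"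
  by (simp add: tr2 mult2)

lemma commut_ent: 
  "commut (P::mat2) Q $1$1 = P$1$2*Q$2$1 - Q$1$2*P$2$1"
  "commut P Q $1$2 = P$1$1*Q$1$2 + P$1$2*Q$2$2 - Q$1$1*P$1$2 - Q$1$2*P$2$2"
  "commut P Q $2$1 = P$2$1*Q$1$1 + P$2$2*Q$2$1 - Q$2$1*P$1$1 - Q$2$2*P$2$1"
  "commut P Q $2$2 = P$2$1*Q$1$2 - Q$2$1*P$1$2"
  by (simp_all add: commut_def mult2 algebra_simps)

lemma tscale_ent[simp]: "tscale c V i $ a $ b = c * V i $ a $ b"
  by (simp add: tscale_def)

lemma vs: "vector_space tscale"
  apply unfold_locales
  apply (auto simp: tscale_def vec_eq_iff algebra_simps)
  done



definition slot :: "nat \<Rightarrow> mat2 \<Rightarrow> tuple" where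
  "slot j M = (\<lambda>i. if i = j then M else 0)"

definition dHe :: "nat \<Rightarrow> tuple \<Rightarrow> nat \<Rightarrow> tuple" where
  "dHe g X m = (\<lambda>j. if j \<le> g then Xc g X (m - j) else 0)"

lemma Xc_big: "a > g + 1 \<Longrightarrow> Xc g X a = 0"
  by (simp add: Xc_def)

lemma Xc_top[simp]: "Xc g X (g+1) = Amat"
  by (simp add: Xc_def)

lemma Xc_tr: "X \<in> MA g \<Longrightarrow> trace (Xc g X a) = 0"
  by (auto simp: Xc_def MA_def sl2_def tr2)

lemma commut_anti: "commut Q P = - commut P Q"
  by (simp add: commut_def)

lemma commut_zero[simp]: "commut P 0 = 0" "commut 0 P = 0"
  by (simp_all add: commut_def)

lemma commut_self: "commut P P = 0"
  by (simp add: commut_def)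

lemma casimir_sum:
  assumes "g + 1 \<le> m" "m \<le> 2*g+1" "i \<le> g"
  shows "(\<Sum>j\<le>g - i. commut (Xc g X (i + j + 1)) (Xc g X (m - j))) = 0"
proof -
  define k where "k = m - g - 1"
  define f where "f j = commut (Xc g X (i + j + 1)) (Xc g X (m - j))" for j
  have "(\<Sum>j\<le>g - i. f j) = (\<Sum>j\<in>{k..g-i}. f j)"
  proof (rule sum.mono_neutral_right)
    show "\<forall>j\<in>{..g - i} - {k..g - i}. f j = 0"
      using assms by (auto simp: f_def k_def Xc_big)
  qed auto
  also have "\<dots> = (\<Sum>j\<in>{k..g-i}. f (k + (g - i) - j))"
    by (rule sum.reindex_bij_witness[where i="\<lambda>j. k + (g - i) - j" and j="\<lambda>j. k + (g - i) - j"]) auto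
  also have "\<dots> = (\<Sum>j\<in>{k..g-i}. - f j)"
  proof (rule sum.cong)
    fix j assume j: "j \<in> {k..g-i}"
    have e1: "i + (k + (g - i) - j) + 1 = m - j" using j assms by (auto simp: k_def)
    have e2: "m - (k + (g - i) - j) = i + j + 1" using j assms by (auto simp: k_def)
    show "f (k + (g - i) - j) = - f j"
      unfolding f_def e1 e2 by (rule commut_anti)
  qed simp
  also have "\<dots> = - (\<Sum>j\<in>{k..g-i}. f j)" by (simp add: sum_negf)
  finally have "(\<Sum>j\<le>g - i. f j) = - (\<Sum>j\<le>g - i. f j)"
    using \<open>(\<Sum>j\<le>g - i. f j) = (\<Sum>j\<in>{k..g-i}. f j)\<close> by simp
  then have "(\<Sum>j\<le>g - i. f j) = 0"
    by (simp add: vec_eq_iff)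
  then show ?thesis by (simp add: f_def)
qed

lemma casimir:
  assumes "g + 1 \<le> m" "m \<le> 2*g+1"
  shows "P0 g X (dHe g X m) = (\<lambda>i. 0)"
proof
  fix i
  show "P0 g X (dHe g X m) i = 0"
  proof (cases "i \<le> g")
    case True
    have "(\<Sum>j\<le>g - i. commut (Xc g X (i + j + 1)) (dHe g X m j))
        = (\<Sum>j\<le>g - i. commut (Xc g X (i + j + 1)) (Xc g X (m - j)))"
      by (rule sum.cong) (auto simp: dHe_def)
    then show ?thesis using casimir_sum[OF assms True] True by (simp add: P0_def)
  qed (simp add: P0_def)
qed



definition Vc :: "nat \<Rightarrow> tuple \<Rightarrow> nat \<Rightarrow> mat2" where
  "Vc g V a = (if a \<le> g then V a else 0)"

lemma Xc_pert: "Xc g (tadd X (tscale t V)) a $ r $ s = Xc g X a $ r $ s + t * Vc g V a $ r $ s"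
  by (simp add: Xc_def Vc_def tadd_def)

lemma bil: "((p::complex) + t * q) * (r + t * s) = p * r + t * (p * s + q * r) + t^2 * (q * s)"
  by (simp add: algebra_simps power2_eq_square)

lemma polyid: "((a1::complex) + t*b1)*(c1+t*d1) + (a2 + t*b2)*(c2+t*d2) + (a3 + t*b3)*(c3+t*d3) + (a4 + t*b4)*(c4+t*d4)
  = (a1*c1 + a2*c2 + a3*c3 + a4*c4) + t * ((a1*d1 + a2*d2 + a3*d3 + a4*d4) + (b1*c1+b2*c2+b3*c3+b4*c4)) + t^2*(b1*d1+b2*d2+b3*d3+b4*d4)"
  unfolding bil by (simp add: algebra_simps)

lemma tr_pert: "trace (Xc g (tadd X (tscale t V)) a ** Xc g (tadd X (tscale t V)) b)
  = trace (Xc g X a ** Xc g X b) + t * (trace (Xc g X a ** Vc g V b) + trace (Vc g V a ** Xc g X b))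
    + t^2 * trace (Vc g V a ** Vc g V b)"
  unfolding trmult Xc_pert by (rule polyid)

lemma if_split3: "(if c then (x::complex) + t * y + t^2 * z else 0) = (if c then x else 0) + t * (if c then y else 0) + t^2 * (if c then z else 0)"
  by simp

lemma Hc_pert: "Hc g m (tadd X (tscale t V)) = Hc g m X
   + t * ((1/2) * (\<Sum>a\<le>g+1. \<Sum>b\<le>g+1. if a + b = m then trace (Xc g X a ** Vc g V b) + trace (Vc g V a ** Xc g X b) else 0))
   + t^2 * ((1/2) * (\<Sum>a\<le>g+1. \<Sum>b\<le>g+1. if a + b = m then trace (Vc g V a ** Vc g V b) else 0))"
  unfolding Hc_def tr_pert if_split3 sum.distrib sum_distrib_left[symmetric]
  by (simp add: distrib_left mult.left_commute)

lemma eqv: "(a + x = m) = (x = m - a \<and> a \<le> (m::nat))" by arith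

lemma trace_zero[simp]: "trace (0::mat2) = 0" by (simp add: tr2)

lemma if_add: "(if c then (x::complex) + y else 0) = (if c then x else 0) + (if c then y else 0)" by simp

lemma inner_delta:
  "(\<Sum>b\<le>(n::nat). if a + b = m then F b else (0::complex)) = (if a \<le> m \<and> m - a \<le> n then F (m - a) else 0)"
proof -
  have "(\<Sum>b\<le>n. if a + b = m then F b else (0::complex)) = sum F {b\<in>{..n}. a + b = m}"
    by (rule sum.inter_filter[symmetric]) simp
  also have "{b\<in>{..n}. a + b = m} = (if a \<le> m \<and> m - a \<le> n then {m - a} else {})"
    by (cases "a \<le> m \<and> m - a \<le> n") auto
  finally show ?thesis by simp
qed

lemma lin_term:
  assumes m: "g + 1 \<le> m"
  shows "(1/2) * (\<Sum>a\<le>g+1. \<Sum>b\<le>g+1. if a + b = m then trace (Xc g X a ** Vc g V b) + trace (Vc g V a ** Xc g X b) else 0)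
     = pairing g (dHe g X m) V"
proof -
  have sw: "(\<Sum>a\<le>g+1. \<Sum>b\<le>g+1. if a + b = m then trace (Xc g X a ** Vc g V b) else 0)
      = (\<Sum>a\<le>g+1. \<Sum>b\<le>g+1. if a + b = m then trace (Vc g V a ** Xc g X b) else 0)"
    proof -
    have e: "\<And>a b. (if b + a = m then trace (Xc g X b ** Vc g V a) else 0) = (if a + b = m then trace (Vc g V a ** Xc g X b) else 0)"
      by (metis add.commute trace_mul_sym)
    show ?thesis by (subst sum.swap) (simp only: e)
  qed
  have "(\<Sum>a\<le>g+1. \<Sum>b\<le>g+1. if a + b = m then trace (Xc g X a ** Vc g V b) + trace (Vc g V a ** Xc g X b) else 0)
     = (\<Sum>a\<le>g+1. \<Sum>b\<le>g+1. if a + b = m then trace (Xc g X a ** Vc g V b) else 0)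
      + (\<Sum>a\<le>g+1. \<Sum>b\<le>g+1. if a + b = m then trace (Vc g V a ** Xc g X b) else 0)"
    unfolding if_add sum.distrib by (rule refl)
  also have "\<dots> = 2 * (\<Sum>a\<le>g+1. \<Sum>b\<le>g+1. if a + b = m then trace (Vc g V a ** Xc g X b) else 0)"
    using sw by simp
  finally have e1: "(1/2) * (\<Sum>a\<le>g+1. \<Sum>b\<le>g+1. if a + b = m then trace (Xc g X a ** Vc g V b) + trace (Vc g V a ** Xc g X b) else 0)
     = (\<Sum>a\<le>g+1. \<Sum>b\<le>g+1. if a + b = m then trace (Vc g V a ** Xc g X b) else 0)" by simp
  also have "\<dots> = (\<Sum>a\<le>g+1. if a \<le> m \<and> m - a \<le> g+1 then trace (Vc g V a ** Xc g X (m - a)) else 0)"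
    by (simp only: inner_delta)
  also have "\<dots> = (\<Sum>a\<le>g+1. trace (Vc g V a ** Xc g X (m - a)))"
    proof (intro sum.cong refl)
    fix a assume a: "a \<in> {..g+1}"
    show "(if a \<le> m \<and> m - a \<le> g+1 then trace (Vc g V a ** Xc g X (m - a)) else 0) = trace (Vc g V a ** Xc g X (m - a))"
    proof (cases "a \<le> g")
      case True
      then have "a \<le> m" using m by simp
      then show ?thesis by (cases "m - a \<le> g + 1") (simp_all add: Xc_big)
    next
      case False
      then show ?thesis by (simp add: Vc_def)
    qed
  qed
  also have "\<dots> = (\<Sum>a\<le>g. trace (Vc g V a ** Xc g X (m - a)))"
    proof -
    have "Vc g V (g+1) = 0" by (simp add: Vc_def)
    then show ?thesis by simp
  qed
  also have "\<dots> = pairing g (dHe g X m) V"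
    unfolding pairing_def
  proof (intro sum.cong refl)
    fix a assume "a \<in> {..g}"
    then show "trace (Vc g V a ** Xc g X (m - a)) = trace (dHe g X m a ** V a)"
      by (simp add: Vc_def dHe_def trace_mul_sym[of "V a"])
  qed
  finally show ?thesis .
qed

lemma dHe_MA: "X \<in> MA g \<Longrightarrow> dHe g X m \<in> MA g"
  by (auto simp: MA_def dHe_def sl2_def Xc_tr)

lemma grad_exists:
  assumes "g + 1 \<le> m" "X \<in> MA g"
  shows "is_grad g (Hc g m) X (dHe g X m)"
  unfolding is_grad_def
proof (intro conjI ballI)
  show "dHe g X m \<in> MA g" using assms by (rule_tac dHe_MA) 
  fix V assume "V \<in> MA g"
  show "((\<lambda>t. Hc g m (tadd X (tscale t V))) has_field_derivative pairing g (dHe g X m) V) (at 0)"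
    unfolding Hc_pert lin_term[OF assms(1)]
    by (auto intro!: derivative_eq_intros)
qed



definition E12m :: mat2 where "E12m = vector [vector [0, 1], vector [0, 0]]"
definition Hm :: mat2 where "Hm = vector [vector [1, 0], vector [0, -1]]"

lemma E12m_ent[simp]: "E12m$1$1 = 0" "E12m$1$2 = 1" "E12m$2$1 = 0" "E12m$2$2 = 0"
  by (simp_all add: E12m_def)
lemma Hm_ent[simp]: "Hm$1$1 = 1" "Hm$1$2 = 0" "Hm$2$1 = 0" "Hm$2$2 = -1"
  by (simp_all add: Hm_def)

lemma Xc_top'[simp]: "Xc g X (Suc g) = Amat"
  by (simp add: Xc_def)

lemma pairing_slot: "i \<le> g \<Longrightarrow> pairing g U (slot i M) = trace (U i ** M)"
proof -
  assume i: "i \<le> g"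
  have "pairing g U (slot i M) = (\<Sum>j\<le>g. if i = j then trace (U j ** M) else 0)"
    unfolding pairing_def by (intro sum.cong refl) (auto simp: slot_def)
  also have "\<dots> = trace (U i ** M)" using i by simp
  finally show ?thesis .
qed

lemma slot_MA: "i \<le> g \<Longrightarrow> trace M = 0 \<Longrightarrow> slot i M \<in> MA g"
  by (auto simp: MA_def slot_def sl2_def tr2)

lemma grad_unique:
  assumes m: "g + 1 \<le> m" and X: "X \<in> MA g" and W: "is_grad g (Hc g m) X W"
  shows "W = dHe g X m"
proof -
  have G: "is_grad g (Hc g m) X (dHe g X m)" by (rule grad_exists[OF m X])
  have eq: "pairing g W V = pairing g (dHe g X m) V" if "V \<in> MA g" for V
    using W G that unfolding is_grad_def by (meson DERIV_unique)
  have WM: "W \<in> MA g" and DM: "dHe g X m \<in> MA g" using W G by (auto simp: is_grad_def)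
  show ?thesis
  proof
    fix i
    show "W i = dHe g X m i"
    proof (cases "i \<le> g")
      case True
      let ?D = "dHe g X m i"
      have t1: "trace (W i ** E12m) = trace (?D ** E12m)"
        using eq[OF slot_MA[OF True]] by (simp add: pairing_slot[OF True] tr2)
      have t2: "trace (W i ** Amat) = trace (?D ** Amat)"
        using eq[OF slot_MA[OF True]] by (simp add: pairing_slot[OF True] tr2)
      have t3: "trace (W i ** Hm) = trace (?D ** Hm)"
        using eq[OF slot_MA[OF True]] by (simp add: pairing_slot[OF True] tr2)
      have t4: "trace (W i) = 0" "trace ?D = 0"
        using WM DM True by (auto simp: MA_def sl2_def)
      have a1: "W i $2$1 = ?D $2$1" and a2: "W i $1$2 = ?D $1$2" and a3: "W i $1$1 - W i $2$2 = ?D $1$1 - ?D $2$2"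
        using t1 t2 t3 unfolding trmult by simp_all
      have b1: "W i $2$2 = - W i $1$1" and b2: "?D $2$2 = - ?D $1$1"
        using t4 unfolding tr2 by (simp_all add: eq_neg_iff_add_eq_0 add.commute)
      have "2 * W i $1$1 = 2 * ?D $1$1" using a3 unfolding b1 b2 by simp
      then have a4: "W i $1$1 = ?D $1$1" by simp
      show ?thesis unfolding mat2_eq using a1 a2 a4 b1 b2 by simp
    next
      case False
      then show ?thesis using WM DM by (auto simp: MA_def)
    qed
  qed
qed

lemma indep_dH:
  assumes c: "(\<lambda>i. \<Sum>m\<in>{g+1..2*g+1}. tscale (c m) (dHe g X m) i) = (\<lambda>i. 0)"
  shows "\<forall>m\<in>{g+1..2*g+1}. c m = 0"
proof -
  have main: "n \<le> g \<longrightarrow> c (g + 1 + n) = 0" for n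
  proof (induction n rule: less_induct)
    case (less n)
    show ?case
    proof
      assume n: "n \<le> g"
      have "(\<Sum>m\<in>{g+1..2*g+1}. tscale (c m) (dHe g X m) n) = 0"
        using fun_cong[OF c, of n] by simp
      then have "(\<Sum>m\<in>{g+1..2*g+1}. tscale (c m) (dHe g X m) n) $ 2 $ 1 = 0" by simp
      moreover have "(\<Sum>m\<in>{g+1..2*g+1}. tscale (c m) (dHe g X m) n) $ 2 $ 1 = (\<Sum>m\<in>{g+1..2*g+1}. c m * Xc g X (m - n) $ 2 $ 1)"
        unfolding sum_component using n by (intro sum.cong refl) (simp add: dHe_def)
      ultimately have s0: "(\<Sum>m\<in>{g+1..2*g+1}. c m * Xc g X (m - n) $ 2 $ 1) = 0" by simp
      have "(\<Sum>m\<in>{g+1..2*g+1}. c m * Xc g X (m - n) $ 2 $ 1)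
          = c (g+1+n) * Xc g X (g+1+n - n) $ 2 $ 1 + (\<Sum>m\<in>{g+1..2*g+1} - {g+1+n}. c m * Xc g X (m - n) $ 2 $ 1)"
        using n by (subst sum.remove[of _ "g+1+n"]) auto
      also have "(\<Sum>m\<in>{g+1..2*g+1} - {g+1+n}. c m * Xc g X (m - n) $ 2 $ 1) = 0"
      proof (rule sum.neutral, rule ballI)
        fix m assume mm: "m \<in> {g+1..2*g+1} - {g+1+n}"
        show "c m * Xc g X (m - n) $ 2 $ 1 = 0"
        proof (cases "m < g + 1 + n")
          case True
          then have "c (g + 1 + (m - g - 1)) = 0" using less.IH[of "m - g - 1"] mm n by auto
          then show ?thesis using mm by auto
        next
          case False
          then have "m - n > g + 1" using mm by auto
          then show ?thesis by (simp add: Xc_big)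
        qed
      qed
      finally show "c (g + 1 + n) = 0" using s0 by simp
    qed
  qed
  show ?thesis
  proof
    fix m assume "m \<in> {g+1..2*g+1}"
    then show "c m = 0" using main[of "m - g - 1"] by auto
  qed
qed



interpretation tv: vector_space tscale by (rule vs)

lemma plus_tuple: "(V + W :: tuple) i = V i + W i" by simp

lemma trace_sum: "trace (sum f A :: mat2) = (\<Sum>a\<in>A. trace (f a))"
  by (induct A rule: infinite_finite_induct) (auto simp: trace_add)

lemma trace_commut: "trace (commut P (Q::mat2)) = 0"
  by (simp add: commut_def trace_sub trace_mul_sym[of P])

lemma commut_add: "commut P (Q + R) = commut P Q + commut P (R::mat2)"
  unfolding mat2_eq by (simp add: commut_ent algebra_simps)

lemma commut_scale: "commut P (\<chi> a b. c * Q $ a $ b) = (\<chi> a b. c * commut P (Q::mat2) $ a $ b)"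
  unfolding mat2_eq by (simp add: commut_ent algebra_simps)

lemma P0_add: "P0 g X (V + W) = P0 g X V + P0 g X W"
  by (rule ext) (simp add: P0_def commut_add sum.distrib)

lemma P0_scale: "P0 g X (tscale c W) = tscale c (P0 g X W)"
proof (rule ext)
  fix i
  show "P0 g X (tscale c W) i = tscale c (P0 g X W) i"
  proof (cases "i \<le> g")
    case True
    have "P0 g X (tscale c W) i = (\<Sum>j\<le>g - i. (\<chi> a b. c * commut (Xc g X (i + j + 1)) (W j) $ a $ b))"
      using True by (simp add: P0_def tscale_def commut_scale)
    also have "\<dots> = tscale c (P0 g X W) i"
      using True by (simp add: P0_def tscale_def vec_eq_iff sum_component sum_distrib_left)
    finally show ?thesis .
  qed (simp add: P0_def tscale_def vec_eq_iff)
qed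

lemma P0_zero: "P0 g X 0 = 0"
  by (rule ext) (simp add: P0_def)

lemma P0_MA: "P0 g X W \<in> MA g"
  by (auto simp: MA_def P0_def sl2_def trace_sum trace_commut)

lemma h1: "(a::complex) + b = 0 \<Longrightarrow> c + d = 0 \<Longrightarrow> a + c + (b + d) = 0"
proof -
  assume "a + b = 0" "c + d = 0"
  moreover have "a + c + (b + d) = (a + b) + (c + d)" by (simp add: add_ac)
  ultimately show ?thesis by simp
qed

lemma h2: "(a::complex) + b = 0 \<Longrightarrow> c * a + c * b = 0"
  by (simp add: distrib_left[symmetric])

lemma MA_subspace: "tv.subspace (MA g)"
  unfolding tv.subspace_def
  by (auto simp: MA_def sl2_def tr2 plus_tuple h1 h2 tscale_def vec_eq_iff)

lemma I_subspace: "tv.subspace (P0 g X ` MA g)"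
proof -
  have s: "tv.subspace (MA g)" by (rule MA_subspace)
  show ?thesis unfolding tv.subspace_def
  proof (intro conjI ballI allI)
    show "0 \<in> P0 g X ` MA g" using s P0_zero unfolding tv.subspace_def by (metis image_eqI)
  next
    fix x y assume "x \<in> P0 g X ` MA g" "y \<in> P0 g X ` MA g"
    then obtain V W where "V \<in> MA g" "W \<in> MA g" "x = P0 g X V" "y = P0 g X W" by auto
    then show "x + y \<in> P0 g X ` MA g" using s unfolding tv.subspace_def
      by (metis P0_add image_eqI)
  next
    fix c x assume "x \<in> P0 g X ` MA g"
    then obtain V where "V \<in> MA g" "x = P0 g X V" by auto
    then show "tscale c x \<in> P0 g X ` MA g" using s unfolding tv.subspace_def
      by (metis P0_scale image_eqI)
  qed
qed

lemma trace_mul_sum_right: "trace ((U::mat2) ** sum f A) = (\<Sum>a\<in>A. trace (U ** f a))"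
  by (induct A rule: infinite_finite_induct) (auto simp: trace_add matrix_add_ldistrib)

lemma trace_mul_sum_left: "trace (sum f A ** (U::mat2)) = (\<Sum>a\<in>A. trace (f a ** U))"
  by (simp add: trace_mul_sym[of "sum f A"] trace_mul_sym[of _ U] trace_mul_sum_right)

lemma trace_commut_swap: "trace ((U::mat2) ** commut Y W) = - trace (commut Y U ** W)"
  unfolding trmult commut_ent by (simp add: algebra_simps)

lemma restrict_sum: "i \<le> (g::nat) \<Longrightarrow> (\<Sum>j\<le>g - i. F j) = (\<Sum>j\<le>g. if i + j \<le> g then F j else (0::complex))"
proof -
  assume i: "i \<le> g"
  have "(\<Sum>j\<le>g. if i + j \<le> g then F j else (0::complex)) = sum F {j\<in>{..g}. i + j \<le> g}"
    by (rule sum.inter_filter[symmetric]) simp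
  also have "{j\<in>{..g}. i + j \<le> g} = {..g - i}" using i by auto
  finally show ?thesis by simp
qed

lemma restrict_sum': "j \<le> (g::nat) \<Longrightarrow> (\<Sum>i\<le>g - j. F i) = (\<Sum>i\<le>g. if i + j \<le> g then F i else (0::complex))"
  using restrict_sum[of j g F] by (simp add: add.commute)

lemma tri_swap: "(\<Sum>i\<le>(g::nat). \<Sum>j\<le>g - i. F i j) = (\<Sum>j\<le>g. \<Sum>i\<le>g - j. (F i j :: complex))"
proof -
  have "(\<Sum>i\<le>g. \<Sum>j\<le>g - i. F i j) = (\<Sum>i\<le>g. \<Sum>j\<le>g. if i + j \<le> g then F i j else 0)"
    by (rule sum.cong[OF refl]) (rule restrict_sum, simp)
  also have "\<dots> = (\<Sum>j\<le>g. \<Sum>i\<le>g. if i + j \<le> g then F i j else 0)"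
    by (rule sum.swap)
  also have "\<dots> = (\<Sum>j\<le>g. \<Sum>i\<le>g - j. F i j)"
    by (rule sum.cong[OF refl]) (rule restrict_sum'[symmetric], simp)
  finally show ?thesis .
qed

lemma skew: "pairing g U (P0 g X W) = - pairing g (P0 g X U) W"
proof -
  have "pairing g U (P0 g X W) = (\<Sum>i\<le>g. \<Sum>j\<le>g - i. trace (U i ** commut (Xc g X (i + j + 1)) (W j)))"
    unfolding pairing_def P0_def by (intro sum.cong refl) (simp add: trace_mul_sum_right)
  also have "\<dots> = (\<Sum>i\<le>g. \<Sum>j\<le>g - i. - trace (commut (Xc g X (i + j + 1)) (U i) ** W j))"
    by (simp add: trace_commut_swap)
  also have "\<dots> = (\<Sum>j\<le>g. \<Sum>i\<le>g - j. - trace (commut (Xc g X (i + j + 1)) (U i) ** W j))"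
    by (rule tri_swap)
  also have "\<dots> = - pairing g (P0 g X U) W"
    unfolding pairing_def P0_def
    by (simp add: trace_mul_sum_left sum_negf add.commute add.left_commute)
  finally show ?thesis .
qed

lemma pairing_zero: "pairing g (\<lambda>i. 0) W = 0"
  by (simp add: pairing_def)

lemma image_in_R:
  assumes "g + 1 \<le> m" "m \<le> 2*g+1"
  shows "pairing g (dHe g X m) (P0 g X W) = 0"
  by (simp add: skew casimir[OF assms] pairing_zero)



definition uf :: "nat \<Rightarrow> tuple \<Rightarrow> nat \<times> nat \<Rightarrow> tuple" where
  "uf g X k = (if snd k = 0 then P0 g X (slot (fst k) Hm)
     else if snd k = 1 then P0 g X (slot (fst k) E12m) else slot (fst k) E12m)"

lemma sumK3: "(\<Sum>k\<in>{..g}\<times>{0,1,2::nat}. f k) = (\<Sum>j\<le>(g::nat). f (j,0) + f (j,1) + f (j,2))"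
  by (simp add: sum.cartesian_product' add.assoc)

lemma sum_tscale_ent: "(\<Sum>k\<in>K. tscale (c k) (u k)) i $ a $ b = (\<Sum>k\<in>K. c k * u k i $ a $ b)"
  by (simp add: sum_app sum_component)

lemma P0_slot: "P0 g X (slot j M) i = (if i \<le> g \<and> i + j \<le> g then commut (Xc g X (i+j+1)) M else 0)"
proof (cases "i \<le> g")
  case True
  have "P0 g X (slot j M) i = (\<Sum>j'\<le>g - i. commut (Xc g X (i+j'+1)) (slot j M j'))"
    using True by (simp add: P0_def)
  also have "\<dots> = (\<Sum>j'\<le>g - i. if j = j' then commut (Xc g X (i+j+1)) M else 0)"
    by (intro sum.cong refl) (auto simp: slot_def)
  also have "\<dots> = (if i \<le> g \<and> i + j \<le> g then commut (Xc g X (i+j+1)) M else 0)"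
    using True by auto
  finally show ?thesis .
qed (simp add: P0_def)

lemma slot_app: "slot j M i = (if i = j then M else 0)" by (simp add: slot_def)

lemma triT:
  fixes x d :: "nat \<Rightarrow> complex"
  assumes x1: "x (g+1) = 1" and h: "\<And>i. i \<le> g \<Longrightarrow> (\<Sum>j\<le>g - i. d j * x (i+j+1)) = 0"
  shows "j \<le> g \<Longrightarrow> d j = 0"
proof (induction j rule: less_induct)
  case (less n)
  have "(\<Sum>j\<le>g - (g - n). d j * x ((g - n)+j+1)) = 0" using h[of "g - n"] by simp
  moreover have "g - (g - n) = n" using less.prems by simp
  ultimately have s: "(\<Sum>j\<le>n. d j * x ((g - n)+j+1)) = 0" by simp
  have "(\<Sum>j\<le>n. d j * x ((g - n)+j+1)) = (\<Sum>j<n. d j * x ((g - n)+j+1)) + d n * x ((g - n)+n+1)"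
    by (simp add: lessThan_Suc_atMost[symmetric])
  also have "(\<Sum>j<n. d j * x ((g - n)+j+1)) = 0"
    using less.IH less.prems by (intro sum.neutral) auto
  also have "(g - n)+n+1 = g + 1" using less.prems by simp
  finally show ?case using s x1 by simp
qed

lemma fam_indep:
  assumes c: "(\<Sum>k\<in>{..g}\<times>{0,1,2::nat}. tscale (c k) (uf g X k)) = 0"
  shows "\<forall>k\<in>{..g}\<times>{0,1,2::nat}. c k = 0"
proof -
  let ?x = "\<lambda>n. Xc g X n $ 2 $ 1"
  have E: "(\<Sum>j\<le>g. c (j,0) * uf g X (j,0) i $ a $ b + c (j,1) * uf g X (j,1) i $ a $ b + c (j,2) * uf g X (j,2) i $ a $ b) = 0"
    for i a b
  proof -
    have "(\<Sum>k\<in>{..g}\<times>{0,1,2::nat}. tscale (c k) (uf g X k)) i $ a $ b = 0" using c by simp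
    then have "(\<Sum>k\<in>{..g}\<times>{0,1,2::nat}. c k * uf g X k i $ a $ b) = 0" by (simp only: sum_tscale_ent)
    then show ?thesis by (simp only: sumK3)
  qed
  have S0: "(\<Sum>j\<le>g - i. (2 * c (j,0)) * ?x (i+j+1)) = 0" if i: "i \<le> g" for i
  proof -
    have "(\<Sum>j\<le>g - i. (2 * c (j,0)) * ?x (i+j+1)) = (\<Sum>j\<le>g. if i + j \<le> g then (2 * c (j,0)) * ?x (i+j+1) else 0)"
      using i by (rule restrict_sum)
    also have "\<dots> = (\<Sum>j\<le>g. c (j,0) * uf g X (j,0) i $ 2 $ 1 + c (j,1) * uf g X (j,1) i $ 2 $ 1 + c (j,2) * uf g X (j,2) i $ 2 $ 1)"
      using i by (intro sum.cong refl) (simp add: uf_def P0_slot commut_ent slot_app)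
    also have "\<dots> = 0" by (rule E)
    finally show ?thesis .
  qed
  have c0: "c (j,0) = 0" if "j \<le> g" for j
    using triT[where x="?x" and d="\<lambda>j. 2 * c (j,0)", OF _ S0 that] by simp
  have S1: "(\<Sum>j\<le>g - i. (- c (j,1)) * ?x (i+j+1)) = 0" if i: "i \<le> g" for i
  proof -
    have "(\<Sum>j\<le>g - i. (- c (j,1)) * ?x (i+j+1)) = (\<Sum>j\<le>g. if i + j \<le> g then (- c (j,1)) * ?x (i+j+1) else 0)"
      using i by (rule restrict_sum)
    also have "\<dots> = (\<Sum>j\<le>g. c (j,0) * uf g X (j,0) i $ 1 $ 1 + c (j,1) * uf g X (j,1) i $ 1 $ 1 + c (j,2) * uf g X (j,2) i $ 1 $ 1)"
      using i by (intro sum.cong refl) (simp add: uf_def P0_slot commut_ent slot_app)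
    also have "\<dots> = 0" by (rule E)
    finally show ?thesis .
  qed
  have c1: "c (j,1) = 0" if "j \<le> g" for j
    using triT[where x="?x" and d="\<lambda>j. - c (j,1)", OF _ S1 that] by simp
  have c2: "c (i,2) = 0" if i: "i \<le> g" for i
  proof -
    have "c (i,2) = (\<Sum>j\<le>g. if j = i then c (j,2) else 0)" using i by simp
    also have "\<dots> = (\<Sum>j\<le>g. c (j,0) * uf g X (j,0) i $ 1 $ 2 + c (j,1) * uf g X (j,1) i $ 1 $ 2 + c (j,2) * uf g X (j,2) i $ 1 $ 2)"
      using c0 c1 by (intro sum.cong refl) (simp add: uf_def P0_slot slot_app)
    also have "\<dots> = 0" by (rule E)
    finally show ?thesis .
  qed
  show ?thesis using c0 c1 c2 by auto
qed



lemma fam_inj_indep: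
  fixes u :: "'k \<Rightarrow> tuple"
  assumes fin: "finite K"
    and P: "\<And>c. (\<Sum>k\<in>K. tscale (c k) (u k)) = 0 \<Longrightarrow> \<forall>k\<in>K. c k = 0"
  shows "inj_on u K" "tv.independent (u ` K)"
proof -
  show inj: "inj_on u K"
  proof (rule inj_onI, rule ccontr)
    fix k l assume k: "k \<in> K" and l: "l \<in> K" and eq: "u k = u l" and ne: "k \<noteq> l"
    define c where "c x = (if x = k then 1 else if x = l then -1 else (0::complex))" for x
    have "(\<Sum>x\<in>K. tscale (c x) (u x)) = (\<Sum>x\<in>{k,l}. tscale (c x) (u x))"
      by (rule sum.mono_neutral_right) (use fin k l in \<open>auto simp: c_def\<close>)
    also have "\<dots> = tscale 1 (u k) + tscale (-1) (u l)"
      using ne by (simp add: c_def)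
    also have "\<dots> = 0" using eq by (simp add: tv.scale_minus_left)
    finally have "\<forall>x\<in>K. c x = 0" by (rule P)
    then have "c k = 0" using k by blast
    then show False by (simp add: c_def)
  qed
  show "tv.independent (u ` K)"
  proof (rule tv.independent_if_scalars_zero)
    show "finite (u ` K)" using fin by simp
  next
    fix f y assume s: "(\<Sum>y\<in>u ` K. tscale (f y) y) = 0" and y: "y \<in> u ` K"
    have "(\<Sum>k\<in>K. tscale (f (u k)) (u k)) = 0"
      using s by (simp add: sum.reindex[OF inj])
    then have "\<forall>k\<in>K. f (u k) = 0" by (rule P)
    then show "f y = 0" using y by auto
  qed
qed

definition stdf :: "nat \<times> nat \<Rightarrow> tuple" where
  "stdf k = slot (fst k) (if snd k = 0 then Hm else if snd k = 1 then E12m else Amat)"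

definition coef :: "tuple \<Rightarrow> nat \<times> nat \<Rightarrow> complex" where
  "coef V k = (if snd k = 0 then V (fst k) $1$1 else if snd k = 1 then V (fst k) $1$2 else V (fst k) $2$1)"

lemma sum_delta_le: "(\<Sum>j\<le>(g::nat). if j = i then F j else (0::complex)) = (if i \<le> g then F i else 0)"
  by simp

lemma MA_decomp:
  assumes V: "V \<in> MA g"
  shows "V = (\<Sum>k\<in>{..g}\<times>{0,1,2::nat}. tscale (coef V k) (stdf k))"
proof (rule ext)
  fix i
  have ent: "(\<Sum>k\<in>{..g}\<times>{0,1,2::nat}. tscale (coef V k) (stdf k)) i $ a $ b
     = (if i \<le> g then V i $1$1 * Hm $a$b + V i $1$2 * E12m $a$b + V i $2$1 * Amat $a$b else 0)" for a b
  proof -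
    have "(\<Sum>k\<in>{..g}\<times>{0,1,2::nat}. tscale (coef V k) (stdf k)) i $ a $ b
       = (\<Sum>k\<in>{..g}\<times>{0,1,2::nat}. coef V k * stdf k i $ a $ b)" by (rule sum_tscale_ent)
    also have "\<dots> = (\<Sum>j\<le>g. coef V (j,0) * stdf (j,0) i $ a $ b + coef V (j,1) * stdf (j,1) i $ a $ b + coef V (j,2) * stdf (j,2) i $ a $ b)"
      by (rule sumK3)
    also have "\<dots> = (\<Sum>j\<le>g. if j = i then V i $1$1 * Hm $a$b + V i $1$2 * E12m $a$b + V i $2$1 * Amat $a$b else 0)"
      by (intro sum.cong refl) (auto simp: coef_def stdf_def slot_app)
    also have "\<dots> = (if i \<le> g then V i $1$1 * Hm $a$b + V i $1$2 * E12m $a$b + V i $2$1 * Amat $a$b else 0)"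
      by (rule sum_delta_le)
    finally show ?thesis .
  qed
  show "V i = (\<Sum>k\<in>{..g}\<times>{0,1,2::nat}. tscale (coef V k) (stdf k)) i"
  proof (cases "i \<le> g")
    case True
    then have "V i $1$1 + V i $2$2 = 0" using V by (auto simp: MA_def sl2_def tr2)
    then have "V i $2$2 = - V i $1$1" by (simp add: eq_neg_iff_add_eq_0 add.commute)
    then show ?thesis unfolding mat2_eq ent using True by simp
  next
    case False
    then show ?thesis using V unfolding mat2_eq ent by (simp add: MA_def)
  qed
qed

lemma MA_span_std: "MA g \<subseteq> tv.span (stdf ` ({..g}\<times>{0,1,2::nat}))"
proof
  fix V assume V: "V \<in> MA g"
  show "V \<in> tv.span (stdf ` ({..g}\<times>{0,1,2::nat}))"
    by (subst MA_decomp[OF V]) (intro tv.span_sum tv.span_scale tv.span_base imageI)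
qed

lemma triT2:
  fixes x v :: "nat \<Rightarrow> complex"
  assumes x1: "x (g+1) = 1" and x0: "\<And>n. n > g + 1 \<Longrightarrow> x n = 0"
    and h: "\<And>k. k \<le> g \<Longrightarrow> (\<Sum>i\<le>g. x (g + 1 + k - i) * v i) = 0"
  shows "n \<le> g \<Longrightarrow> v (g - n) = 0"
proof (induction n rule: less_induct)
  case (less n)
  have s: "(\<Sum>i\<le>g. x (g + 1 + (g - n) - i) * v i) = 0" using h[of "g - n"] by simp
  have "(\<Sum>i\<le>g. x (g + 1 + (g - n) - i) * v i) = x (g + 1 + (g - n) - (g - n)) * v (g - n)
        + (\<Sum>i\<in>{..g} - {g - n}. x (g + 1 + (g - n) - i) * v i)"
    by (subst sum.remove[of _ "g - n"]) auto
  also have "(\<Sum>i\<in>{..g} - {g - n}. x (g + 1 + (g - n) - i) * v i) = 0"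
  proof (rule sum.neutral, rule ballI)
    fix i assume i: "i \<in> {..g} - {g - n}"
    show "x (g + 1 + (g - n) - i) * v i = 0"
    proof (cases "i < g - n")
      case True
      then show ?thesis using x0[of "g + 1 + (g - n) - i"] by simp
    next
      case False
      then have "g - (g - i) = i" "g - i < n" using i less.prems by auto
      then have "v i = 0" using less.IH[of "g - i"] by auto
      then show ?thesis by simp
    qed
  qed
  finally show ?case using s x1 by simp
qed



lemma pairing_add: "pairing g U (V + W) = pairing g U V + pairing g U W"
  unfolding pairing_def by (simp add: matrix_add_ldistrib trace_add sum.distrib)

lemma pairing_scale: "pairing g U (tscale c V) = c * pairing g U V"
  unfolding pairing_def sum_distrib_left
  by (intro sum.cong refl) (simp add: trmult algebra_simps)

lemma pairing_zero_right: "pairing g U 0 = 0"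
  by (simp add: pairing_def)

definition R0 :: "nat \<Rightarrow> tuple \<Rightarrow> tuple set" where
  "R0 g X = {V\<in>MA g. \<forall>m\<in>{g+1..2*g+1}. pairing g (dHe g X m) V = 0}"

lemma R0_subspace: "tv.subspace (R0 g X)"
  using MA_subspace[of g] unfolding tv.subspace_def R0_def
  by (auto simp: pairing_add pairing_scale pairing_zero_right)

lemma R0_zero:
  assumes V: "V \<in> R0 g X" and z: "\<And>i. V i $1$1 = 0 \<and> V i $2$1 = 0"
  shows "V = 0"
proof -
  have VM: "V \<in> MA g" using V by (simp add: R0_def)
  have z2: "V i $2$2 = 0" if "i \<le> g" for i
    using VM z[of i] that by (auto simp: MA_def sl2_def tr2)
  let ?x = "\<lambda>n. Xc g X n $ 2 $ 1"
  have h: "(\<Sum>i\<le>g. ?x (g + 1 + k - i) * V i $1$2) = 0" if k: "k \<le> g" for k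
  proof -
    have "pairing g (dHe g X (g+1+k)) V = 0" using V k by (auto simp: R0_def)
    moreover have "pairing g (dHe g X (g+1+k)) V = (\<Sum>i\<le>g. ?x (g + 1 + k - i) * V i $1$2)"
      unfolding pairing_def by (intro sum.cong refl) (simp add: dHe_def trmult z z2)
    ultimately show ?thesis by simp
  qed
  have x0: "?x n = 0" if "n > g + 1" for n using that by (simp add: Xc_big)
  have v12: "V i $1$2 = 0" if "i \<le> g" for i
  proof -
    have "V (g - (g - i)) $1$2 = 0"
      by (rule triT2[where x="?x" and v="\<lambda>i. V i $1$2", OF _ x0 h]) (use that in auto)
    then show ?thesis using that by simp
  qed
  show ?thesis
  proof
    fix i show "V i = 0 i"
    proof (cases "i \<le> g")
      case True then show ?thesis unfolding mat2_eq using z[of i] z2 v12 by simp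
    next
      case False then show ?thesis using VM by (simp add: MA_def)
    qed
  qed
qed

lemma key:
  assumes X: "X \<in> MA g"
  shows "P0 g X ` MA g = R0 g X \<and> tv.dim (P0 g X ` MA g) = 2 * (g + 1)"
proof -
  let ?K3 = "{..g}\<times>{0,1,2::nat}" and ?K2 = "{..g}\<times>{0,1::nat}" and ?Kc = "{..g}\<times>{2::nat}"
  let ?u = "uf g X"
  let ?B3 = "?u ` ?K3" and ?B2 = "?u ` ?K2" and ?I = "P0 g X ` MA g"
  have fin3: "finite ?K3" by simp
  have K23: "?K2 \<subseteq> ?K3" by auto
  have inj3: "inj_on ?u ?K3" and ind3: "tv.independent ?B3"
    using fam_inj_indep[OF fin3, of ?u] fam_indep[of _ g X] by blast+
  have ind2: "tv.independent ?B2" using ind3 K23 by (meson image_mono tv.independent_mono)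
  have cardK2: "card ?K2 = 2 * (g + 1)" by (simp add: card_cartesian_product)
  have cardK3: "card ?K3 = 3 * (g + 1)" by (simp add: card_cartesian_product)
  have card2: "card ?B2 = 2 * (g + 1)"
    using card_image[OF inj_on_subset[OF inj3 K23]] cardK2 by simp
  have card3: "card ?B3 = 3 * (g + 1)"
    using card_image[OF inj3] cardK3 by simp
  have trE: "trace E12m = 0" "trace Hm = 0" by (simp_all add: tr2)
  have B3MA: "?B3 \<subseteq> MA g"
    using P0_MA slot_MA trE by (auto simp: uf_def)
  have B2I: "?B2 \<subseteq> ?I"
  proof
    fix y assume "y \<in> ?B2"
    then obtain j s where js: "j \<le> g" "s \<in> {0,1::nat}" "y = ?u (j,s)" by auto
    show "y \<in> ?I"
    proof (cases "s = 0")
      case True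
      then show ?thesis using js slot_MA[OF js(1) trE(2)] by (auto simp: uf_def)
    next
      case False
      then have "s = 1" using js by auto
      then show ?thesis using js slot_MA[OF js(1) trE(1)] by (auto simp: uf_def)
    qed
  qed
  have IR: "?I \<subseteq> R0 g X"
    using P0_MA image_in_R by (auto simp: R0_def)
  have MAspan: "MA g \<subseteq> tv.span ?B3"
  proof (rule subsetI, rule ccontr)
    fix x assume x: "x \<in> MA g" and nx: "x \<notin> tv.span ?B3"
    let ?S = "stdf ` ?K3"
    have ind: "tv.independent (insert x ?B3)" by (rule tv.independent_insertI[OF nx ind3])
    have s1: "x \<in> tv.span ?S" using x MA_span_std[of g] by (rule subsetD[rotated])
    have s2: "?B3 \<subseteq> tv.span ?S" using B3MA MA_span_std[of g] by (rule subset_trans)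
    have sub: "insert x ?B3 \<subseteq> tv.span ?S" using s1 s2 by (simp only: insert_subset)
    have finS: "finite ?S" by simp
    have "card (insert x ?B3) \<le> card ?S"
      using tv.independent_span_bound[OF finS ind sub] by (rule conjunct2)
    also have "\<dots> \<le> card ?K3" by (rule card_image_le) simp
    finally have c1: "card (insert x ?B3) \<le> 3 * (g + 1)" using cardK3 by simp
    have "x \<notin> ?B3"
    proof
      assume "x \<in> ?B3"
      then have "x \<in> tv.span ?B3" by (rule tv.span_base)
      with nx show False by simp
    qed
    then have "card (insert x ?B3) = 3 * (g + 1) + 1" using card3 by simp
    then show False using c1 by simp
  qed
  have span2R: "tv.span ?B2 \<subseteq> R0 g X"
    by (rule tv.span_minimal[OF _ R0_subspace]) (use B2I IR in auto)
  have R0span: "R0 g X \<subseteq> tv.span ?B2"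
  proof
    fix r assume r: "r \<in> R0 g X"
    then have "r \<in> tv.span ?B3" using MAspan by (auto simp: R0_def)
    then obtain cf where "r = (\<Sum>y\<in>?B3. tscale (cf y) y)"
      using tv.span_finite[of ?B3] by auto
    then have r3: "r = (\<Sum>k\<in>?K3. tscale (cf (?u k)) (?u k))"
      by (simp only: sum.reindex[OF inj3] o_def)
    define i0 where "i0 = (\<Sum>k\<in>?K2. tscale (cf (?u k)) (?u k))"
    define e where "e = (\<Sum>k\<in>?Kc. tscale (cf (?u k)) (?u k))"
    have K3u: "?K3 = ?K2 \<union> ?Kc" by auto
    have "r = i0 + e" unfolding r3 i0_def e_def K3u
      by (rule sum.union_disjoint) auto
    have i0s: "i0 \<in> tv.span ?B2" unfolding i0_def
      by (intro tv.span_sum tv.span_scale tv.span_base imageI)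
    then have "i0 \<in> R0 g X" using span2R by auto
    then have "r - i0 \<in> R0 g X" using tv.subspace_diff[OF R0_subspace r] by blast
    moreover have "r - i0 = e" using \<open>r = i0 + e\<close> by simp
    ultimately have eR: "e \<in> R0 g X" by simp
    have ez: "e i $1$1 = 0 \<and> e i $2$1 = 0" for i
    proof -
      have "e i $ a $ b = (\<Sum>k\<in>?Kc. cf (?u k) * ?u k i $ a $ b)" for a b
        unfolding e_def by (rule sum_tscale_ent)
      moreover have "(\<Sum>k\<in>?Kc. cf (?u k) * ?u k i $ 1 $ 1) = 0"
        by (rule sum.neutral) (auto simp: uf_def slot_app)
      moreover have "(\<Sum>k\<in>?Kc. cf (?u k) * ?u k i $ 2 $ 1) = 0"
        by (rule sum.neutral) (auto simp: uf_def slot_app)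
      ultimately show ?thesis by simp
    qed
    have "e = 0" by (rule R0_zero[OF eR ez])
    then show "r \<in> tv.span ?B2" using \<open>r = i0 + e\<close> i0s by simp
  qed
  have IspanB2: "?I \<subseteq> tv.span ?B2" using IR R0span by auto
  have dim: "tv.dim ?I = 2 * (g + 1)"
    by (rule tv.dim_unique[OF B2I IspanB2 ind2 card2])
  have "tv.span ?B2 \<subseteq> ?I" by (rule tv.span_minimal[OF B2I I_subspace])
  then have "?I = R0 g X" using IR R0span by auto
  then show ?thesis using dim by simp
qed



theorem mainTheorem3:
  fixes g :: nat
  assumes "g \<ge> 1"
  shows
    \<comment> \<open>symplectic leaves have dimension 2(g+1): rank of P_0 is 2(g+1) at every point\<close>
    "(\<forall>X\<in>MA g. vector_space.dim tscale (P0 g X ` MA g) = 2 * (g + 1))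
     \<comment> \<open>H_{g+1},...,H_{2g+1} are Casimirs\<close>
   \<and> (\<forall>m\<in>{g+1..2*g+1}. \<forall>X\<in>MA g.
        (\<exists>W. is_grad g (Hc g m) X W) \<and> (\<forall>W. is_grad g (Hc g m) X W \<longrightarrow> P0 g X W = (\<lambda>i. 0)))
     \<comment> \<open>functional independence: differentials linearly independent at every point\<close>
   \<and> (\<forall>X\<in>MA g. \<forall>dH. (\<forall>m\<in>{g+1..2*g+1}. is_grad g (Hc g m) X (dH m)) \<longrightarrow>
        (\<forall>c::nat \<Rightarrow> complex. (\<lambda>i. \<Sum>m\<in>{g+1..2*g+1}. tscale (c m) (dH m) i) = (\<lambda>i. 0)
           \<longrightarrow> (\<forall>m\<in>{g+1..2*g+1}. c m = 0)))
     \<comment> \<open>leaves = level sets: tangent space of the leaf equals tangent space of the common level set\<close>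
   \<and> (\<forall>X\<in>MA g. \<forall>dH. (\<forall>m\<in>{g+1..2*g+1}. is_grad g (Hc g m) X (dH m)) \<longrightarrow>
        P0 g X ` MA g = {V\<in>MA g. \<forall>m\<in>{g+1..2*g+1}. pairing g (dH m) V = 0})"
proof -
  have p1: "\<forall>X\<in>MA g. vector_space.dim tscale (P0 g X ` MA g) = 2 * (g + 1)"
    using key by blast
  have p2: "\<forall>m\<in>{g+1..2*g+1}. \<forall>X\<in>MA g.
        (\<exists>W. is_grad g (Hc g m) X W) \<and> (\<forall>W. is_grad g (Hc g m) X W \<longrightarrow> P0 g X W = (\<lambda>i. 0))"
  proof (intro ballI conjI allI impI)
    fix m X assume m: "m \<in> {g+1..2*g+1}" and X: "X \<in> MA g"
    show "\<exists>W. is_grad g (Hc g m) X W" using grad_exists[OF _ X] m by auto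
    fix W assume "is_grad g (Hc g m) X W"
    then have "W = dHe g X m" using grad_unique[OF _ X] m by auto
    then show "P0 g X W = (\<lambda>i. 0)" using casimir m by auto
  qed
  have eqd: "dH m = dHe g X m" if "X \<in> MA g" "\<forall>m\<in>{g+1..2*g+1}. is_grad g (Hc g m) X (dH m)" "m \<in> {g+1..2*g+1}"
    for X dH m using grad_unique[OF _ that(1)] that(2,3) by auto
  have p3: "\<forall>X\<in>MA g. \<forall>dH. (\<forall>m\<in>{g+1..2*g+1}. is_grad g (Hc g m) X (dH m)) \<longrightarrow>
        (\<forall>c::nat \<Rightarrow> complex. (\<lambda>i. \<Sum>m\<in>{g+1..2*g+1}. tscale (c m) (dH m) i) = (\<lambda>i. 0)
           \<longrightarrow> (\<forall>m\<in>{g+1..2*g+1}. c m = 0))"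
  proof (rule ballI, rule allI, rule impI, rule allI, rule impI)
    fix X dH c
    assume X: "X \<in> MA g" and G: "\<forall>m\<in>{g+1..2*g+1}. is_grad g (Hc g m) X (dH m)"
      and S: "(\<lambda>i. \<Sum>m\<in>{g+1..2*g+1}. tscale (c m) (dH m) i) = (\<lambda>i. 0)"
    have "(\<lambda>i. \<Sum>m\<in>{g+1..2*g+1}. tscale (c m) (dH m) i) = (\<lambda>i. \<Sum>m\<in>{g+1..2*g+1}. tscale (c m) (dHe g X m) i)"
      by (rule ext, rule sum.cong[OF refl]) (simp add: eqd[OF X G])
    then have "(\<lambda>i. \<Sum>m\<in>{g+1..2*g+1}. tscale (c m) (dHe g X m) i) = (\<lambda>i. 0)" using S by simp
    then show "\<forall>m\<in>{g+1..2*g+1}. c m = 0" by (rule indep_dH)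
  qed
  have p4: "\<forall>X\<in>MA g. \<forall>dH. (\<forall>m\<in>{g+1..2*g+1}. is_grad g (Hc g m) X (dH m)) \<longrightarrow>
        P0 g X ` MA g = {V\<in>MA g. \<forall>m\<in>{g+1..2*g+1}. pairing g (dH m) V = 0}"
  proof (intro ballI allI impI)
    fix X dH
    assume X: "X \<in> MA g" and G: "\<forall>m\<in>{g+1..2*g+1}. is_grad g (Hc g m) X (dH m)"
    have "{V\<in>MA g. \<forall>m\<in>{g+1..2*g+1}. pairing g (dH m) V = 0} = R0 g X"
      unfolding R0_def using eqd[OF X G] by auto
    then show "P0 g X ` MA g = {V\<in>MA g. \<forall>m\<in>{g+1..2*g+1}. pairing g (dH m) V = 0}"
      using key[OF X] by simp
  qed
  show ?thesis using p1 p2 p3 p4 by blast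
qed

end
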